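(* Let $A \in \mathbb{R}^{n\times n}$ be symmetric positive definite with smallest eigenvalue $\alpha>0$ and largest eigenvalue $\beta$. Let $\xi \ge 0$, $\eta = \frac{1}{1+\xi}$, and $\zeta = \frac{2\eta}{\alpha+\beta}$. Let $f(t) = 2t - t^2$ and $P_1 = 2\zeta I - \zeta^2 A$. Set $\hat\alpha_\eta = \frac{2\eta\alpha}{\alpha+\beta}$ and $\hat\beta_\eta = \frac{2\eta\beta}{\alpha+\beta}$, and assume $\hat \alpha_\eta + 2(1 - \eta) < 1$. Denote by $$\hat \alpha_\eta = \lambda_1^{(0)} \le \lambda_2^{(0)} \le \ldots \le \lambda_n^{(0)} = \hat \beta_\eta$$ the eigenvalues of the scaled matrix $\zeta A$, and by $$\lambda_1^{(1)} \le \lambda_2^{(1)} \le \ldots \le \lambda_n^{(1)}$$ the eigenvalues of $P_1 A$ (counted with multiplicity). Let $k$ be the integer satisfying $\lambda_k^{(0)} \le \hat \alpha_\eta + 2(1 - \eta) \le \lambda_{k+1}^{(0)}$. Then $$\lambda_j^{(1)} = f(\lambda_j^{(0)}), \qquad j = 1, \ldots, k.$$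
   Context: Note that $P_1 A = 2\zeta A - \zeta^2 A^2 = f(\zeta A)$, i.e. $P_1$ is the first step of the scaled Newton (Hotelling) iteration for $A^{-1}$ started from $P_0 = I$, with the scaling $\zeta = 2/((\alpha+\beta)(1+\xi))$ obtained by enlarging the usual parameter $\theta = (\alpha+\beta)/2$ to $\bar\theta = \theta(1+\xi)$. *)

theory Defs
  imports "Jordan_Normal_Form.Char_Poly" "HOL-Library.Multiset"
begin

definition spd_mat :: "nat \<Rightarrow> real mat \<Rightarrow> bool" where
  "spd_mat n A \<longleftrightarrow> A \<in> carrier_mat n n \<and> transpose_mat A = A \<and>
     (\<forall>x \<in> carrier_vec n. x \<noteq> 0\<^sub>v n \<longrightarrow> x \<bullet> (A *\<^sub>v x) > 0)"

text \<open>Eigenvalues counted with algebraic multiplicity (roots of the characteristic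
  polynomial), sorted increasingly; entry i of the list is lambda_(i+1).\<close>
definition eigs :: "real mat \<Rightarrow> real list" where
  "eigs A = sorted_list_of_multiset (proots (char_poly A))"

definition f_newton :: "real \<Rightarrow> real" where
  "f_newton t = 2 * t - t^2"

end

theory Submission
  imports Defs "Jordan_Normal_Form.Schur_Decomposition"
begin


interpretation of_real_poly_hom: map_poly_comm_ring_hom "of_real :: real \<Rightarrow> complex" ..

lemma map_poly_of_real_prod:
  "map_poly (of_real :: real \<Rightarrow> complex) (\<Prod>r\<leftarrow>rs. [:-r,1:]) = (\<Prod>r\<leftarrow>rs. [:-of_real r,1:])"
proof (induction rs)
  case (Cons a rs)
  have "map_poly (of_real :: real \<Rightarrow> complex) ([:-a,1:] * (\<Prod>r\<leftarrow>rs. [:-r,1:]))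
     = map_poly of_real [:-a,1:] * map_poly of_real (\<Prod>r\<leftarrow>rs. [:-r,1:])"
    by (rule of_real_poly_hom.hom_mult)
  thus ?case using Cons by simp
qed simp

lemma herm_eig_real:
  fixes A :: "real mat" and v :: "complex vec" and a :: complex
  assumes A: "A \<in> carrier_mat n n" and sym: "transpose_mat A = A"
    and ev: "eigenvector (map_mat of_real A) v a"
  shows "Im a = 0"
proof -
  let ?C = "map_mat (of_real :: real \<Rightarrow> complex) A"
  have v: "v \<in> carrier_vec n" and v0: "v \<noteq> 0\<^sub>v n" and Cv: "?C *\<^sub>v v = a \<cdot>\<^sub>v v"
    using ev A unfolding eigenvector_def by auto
  have sy: "A $$ (i,j) = A $$ (j,i)" if "i < n" "j < n" for i j
  proof -
    have "A $$ (i,j) = (transpose_mat A) $$ (i,j)" using sym by simp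
    also have "\<dots> = A $$ (j,i)" using A that by simp
    finally show ?thesis .
  qed
  have row: "\<And>i. i < n \<Longrightarrow> (\<Sum>j<n. of_real (A $$ (i,j)) * v $ j) = a * v $ i"
  proof -
    fix i assume i: "i < n"
    have "(?C *\<^sub>v v) $ i = a * v $ i" using Cv i v by simp
    thus "(\<Sum>j<n. of_real (A $$ (i,j)) * v $ j) = a * v $ i"
      using i v A by (simp add: scalar_prod_def row_def lessThan_atLeast0)
  qed
  define S where "S = (\<Sum>i<n. \<Sum>j<n. cnj (v $ i) * of_real (A $$ (i,j)) * v $ j)"
  define N where "N = (\<Sum>i<n. (Re (v $ i))^2 + (Im (v $ i))^2)"
  have S1: "S = a * of_real N"
  proof -
    have "S = (\<Sum>i<n. cnj (v $ i) * (\<Sum>j<n. of_real (A $$ (i,j)) * v $ j))"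
      unfolding S_def by (simp add: sum_distrib_left mult.assoc)
    also have "\<dots> = (\<Sum>i<n. a * (cnj (v $ i) * v $ i))" using row by (simp add: mult.commute mult.left_commute)
    also have "\<dots> = a * (\<Sum>i<n. cnj (v $ i) * v $ i)" by (simp add: sum_distrib_left)
    also have "(\<Sum>i<n. cnj (v $ i) * v $ i) = of_real N" unfolding N_def of_real_sum
      by (intro sum.cong refl) (simp add: complex_eq_iff power2_eq_square)
    finally show ?thesis .
  qed
  have S2: "cnj S = S"
  proof -
    have "cnj S = (\<Sum>i<n. \<Sum>j<n. v $ i * of_real (A $$ (i,j)) * cnj (v $ j))"
      unfolding S_def by (simp add: cnj_sum)
    also have "\<dots> = (\<Sum>j<n. \<Sum>i<n. v $ i * of_real (A $$ (i,j)) * cnj (v $ j))"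
      by (rule sum.swap)
    also have "\<dots> = S" unfolding S_def
      by (intro sum.cong refl) (simp add: sy mult.commute mult.left_commute)
    finally show ?thesis .
  qed
  have "N > 0"
  proof -
    have "\<exists>i<n. v $ i \<noteq> 0"
    proof (rule ccontr)
      assume "\<not> (\<exists>i<n. v $ i \<noteq> 0)"
      hence "v = 0\<^sub>v n" using v by (intro eq_vecI) auto
      with v0 show False by simp
    qed
    then obtain i where i: "i < n" "v $ i \<noteq> 0" by blast
    have "(Re (v $ i))^2 + (Im (v $ i))^2 \<le> N" unfolding N_def
      by (rule member_le_sum) (use i in auto)
    moreover have "(Re (v $ i))^2 + (Im (v $ i))^2 > 0" using i
      by (metis add_nonneg_nonneg complex_eq_0 less_eq_real_def zero_le_power2)
    ultimately show ?thesis by linarith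
  qed
  from S1 S2 have "cnj a * of_real N = a * of_real N" by simp
  with \<open>N > 0\<close> have "cnj a = a" by simp
  hence "Im (cnj a) = Im a" by simp
  thus ?thesis by simp
qed

lemma poly_linprod: "poly (\<Prod>a\<leftarrow>as. [:-a,1:]) x = (\<Prod>a\<leftarrow>as. x - a)" for x :: "'a :: comm_ring_1"
proof (induction as)
  case (Cons a as)
  have "poly (\<Prod>a\<leftarrow>a # as. [:-a,1:]) x = poly [:-a,1:] x * poly (\<Prod>a\<leftarrow>as. [:-a,1:]) x"
    by (simp only: list.map prod_list.Cons poly_mult)
  also have "poly [:-a,1:] x = x - a" by simp
  finally show ?case using Cons by (simp add: algebra_simps)
qed simp

lemma real_split:
  fixes A :: "real mat"
  assumes A: "A \<in> carrier_mat n n" and sym: "transpose_mat A = A"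
  shows "\<exists>rs. char_poly A = (\<Prod>r\<leftarrow>rs. [:-r,1:]) \<and> length rs = n"
proof -
  let ?C = "map_mat (of_real :: real \<Rightarrow> complex) A"
  have C: "?C \<in> carrier_mat n n" using A by simp
  have cC: "char_poly ?C = map_poly of_real (char_poly A)"
    using of_real_hom.char_poly_hom[OF A] by simp
  obtain as where as: "char_poly ?C = (\<Prod>a\<leftarrow>as. [:-a,1:])" "length as = n"
    using char_poly_factorized[OF C] by blast
  have im: "Im a = 0" if a: "a \<in> set as" for a
  proof -
    have "poly (char_poly ?C) a = 0" unfolding as(1) poly_linprod
      using a by (simp add: prod_list_zero_iff)
    hence "eigenvalue ?C a" using eigenvalue_root_char_poly[OF C] by simp
    then obtain v where "eigenvector ?C v a" unfolding eigenvalue_def by blast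
    thus ?thesis by (rule herm_eig_real[OF A sym])
  qed
  define rs where "rs = map Re as"
  have asrs: "as = map of_real rs" unfolding rs_def using im
    by (induction as) (auto simp: complex_eq_iff)
  have "map_poly (of_real :: real \<Rightarrow> complex) (char_poly A) = map_poly of_real (\<Prod>r\<leftarrow>rs. [:-r,1:])"
    using cC as(1) unfolding asrs map_poly_of_real_prod by (simp add: o_def)
  note eqm = this
  have "char_poly A = (\<Prod>r\<leftarrow>rs. [:-r,1:])"
  proof (rule poly_eqI)
    fix i
    have "(of_real (coeff (char_poly A) i) :: complex) = of_real (coeff (\<Prod>r\<leftarrow>rs. [:-r,1:]) i)"
      using arg_cong[OF eqm, of "\<lambda>p. coeff p i"] by (simp add: coeff_map_poly)
    thus "coeff (char_poly A) i = coeff (\<Prod>r\<leftarrow>rs. [:-r,1:]) i" by simp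
  qed
  moreover have "length rs = n" using as(2) rs_def by simp
  ultimately show ?thesis by blast
qed

lemma pos_eig_pos:
  fixes A :: "real mat"
  assumes A: "A \<in> carrier_mat n n"
    and pd: "\<forall>x \<in> carrier_vec n. x \<noteq> 0\<^sub>v n \<longrightarrow> x \<bullet> (A *\<^sub>v x) > 0"
    and r: "poly (char_poly A) r = 0"
  shows "r > 0"
proof -
  have "eigenvalue A r" using eigenvalue_root_char_poly[OF A] r by simp
  then obtain x where "eigenvector A x r" unfolding eigenvalue_def by blast
  hence x: "x \<in> carrier_vec n" "x \<noteq> 0\<^sub>v n" "A *\<^sub>v x = r \<cdot>\<^sub>v x"
    using A unfolding eigenvector_def by auto
  have "x \<bullet> (A *\<^sub>v x) = r * (x \<bullet> x)" using x by simp
  moreover have "x \<bullet> (A *\<^sub>v x) > 0" using pd x by blast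
  ultimately have "r * (x \<bullet> x) > 0" by simp
  moreover have "x \<bullet> x \<ge> 0" unfolding scalar_prod_def by (intro sum_nonneg) simp
  ultimately show ?thesis by (simp add: zero_less_mult_iff)
qed

lemma ut_mult:
  fixes X Y :: "'a :: comm_ring_1 mat"
  assumes X: "X \<in> carrier_mat n n" and Y: "Y \<in> carrier_mat n n"
    and uX: "upper_triangular X" and uY: "upper_triangular Y"
  shows "upper_triangular (X * Y)" "diag_mat (X * Y) = map (\<lambda>i. X $$ (i,i) * Y $$ (i,i)) [0..<n]"
proof -
  have ent: "(X * Y) $$ (i,j) = (\<Sum>k\<in>{0..<n}. X $$ (i,k) * Y $$ (k,j))" if "i < n" "j < n" for i j
    using X Y that by (simp add: scalar_prod_def)
  have zX: "X $$ (i,k) = 0" if "i < n" "k < i" for i k using uX X that by auto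
  have zY: "Y $$ (k,j) = 0" if "k < n" "j < k" for k j using uY Y that by auto
  show "upper_triangular (X * Y)"
  proof (rule upper_triangularI)
    fix i j assume ij: "j < i" "i < dim_row (X * Y)"
    hence i: "i < n" using X by simp
    have "(\<Sum>k\<in>{0..<n}. X $$ (i,k) * Y $$ (k,j)) = 0"
    proof (rule sum.neutral, intro ballI)
      fix k assume "k \<in> {0..<n}"
      thus "X $$ (i,k) * Y $$ (k,j) = 0" using zX[OF i] zY ij by (cases "k < i") auto
    qed
    thus "(X * Y) $$ (i,j) = 0" using ent ij i by simp
  qed
  have "(X * Y) $$ (i,i) = X $$ (i,i) * Y $$ (i,i)" if i: "i < n" for i
  proof -
    have "(\<Sum>k\<in>{0..<n}. X $$ (i,k) * Y $$ (k,i)) = X $$ (i,i) * Y $$ (i,i)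
       + (\<Sum>k\<in>{0..<n} - {i}. X $$ (i,k) * Y $$ (k,i))"
      using i by (simp add: sum.remove)
    also have "(\<Sum>k\<in>{0..<n} - {i}. X $$ (i,k) * Y $$ (k,i)) = 0"
    proof (rule sum.neutral, intro ballI)
      fix k assume "k \<in> {0..<n} - {i}"
      thus "X $$ (i,k) * Y $$ (k,i) = 0" using zX[OF i] zY by (cases "k < i") auto
    qed
    finally have "(\<Sum>k\<in>{0..<n}. X $$ (i,k) * Y $$ (k,i)) = X $$ (i,i) * Y $$ (i,i)" by simp
    thus ?thesis using ent i by simp
  qed
  thus "diag_mat (X * Y) = map (\<lambda>i. X $$ (i,i) * Y $$ (i,i)) [0..<n]"
    unfolding diag_mat_def using X by simp
qed

lemma sim_smult:
  fixes A :: "'a :: comm_ring_1 mat"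
  assumes A: "A \<in> carrier_mat n n" and sim: "similar_mat_wit A B P Q"
  shows "similar_mat_wit (c \<cdot>\<^sub>m A) (c \<cdot>\<^sub>m B) P Q"
proof -
  from similar_mat_witD2[OF A sim] have w: "P * Q = 1\<^sub>m n" "Q * P = 1\<^sub>m n" "A = P * B * Q"
    "{B, P, Q} \<subseteq> carrier_mat n n" by auto
  have B: "B \<in> carrier_mat n n" and P: "P \<in> carrier_mat n n" and Q: "Q \<in> carrier_mat n n" using w by auto
  have "P * (c \<cdot>\<^sub>m B) * Q = (c \<cdot>\<^sub>m (P * B)) * Q" using mult_smult_distrib[OF P B] by simp
  also have "\<dots> = c \<cdot>\<^sub>m (P * B * Q)" using P B Q by (simp add: mult_smult_assoc_mat[of _ n n _ n])
  finally have "c \<cdot>\<^sub>m A = P * (c \<cdot>\<^sub>m B) * Q" using w by simp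
  thus ?thesis using w by (intro similar_mat_witI[of _ _ n]) auto
qed

lemma sim_newton:
  fixes A :: "'a :: comm_ring_1 mat"
  assumes A: "A \<in> carrier_mat n n" and sim: "similar_mat_wit A B P Q"
  shows "similar_mat_wit ((c \<cdot>\<^sub>m 1\<^sub>m n - d \<cdot>\<^sub>m A) * A) ((c \<cdot>\<^sub>m 1\<^sub>m n - d \<cdot>\<^sub>m B) * B) P Q"
proof -
  from similar_mat_witD2[OF A sim] have w: "P * Q = 1\<^sub>m n" "Q * P = 1\<^sub>m n" "A = P * B * Q"
    and B: "B \<in> carrier_mat n n" and P: "P \<in> carrier_mat n n" and Q: "Q \<in> carrier_mat n n" by auto
  define X where "X = c \<cdot>\<^sub>m 1\<^sub>m n - d \<cdot>\<^sub>m B"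
  have X: "X \<in> carrier_mat n n" unfolding X_def using B
    by (intro minus_carrier_mat smult_carrier_mat) auto
  have I: "c \<cdot>\<^sub>m 1\<^sub>m n \<in> carrier_mat n n" "d \<cdot>\<^sub>m B \<in> carrier_mat n n" using B by auto
  have "P * X = P * (c \<cdot>\<^sub>m 1\<^sub>m n) - P * (d \<cdot>\<^sub>m B)"
    unfolding X_def by (rule mult_minus_distrib_mat[OF P I])
  also have "\<dots> = c \<cdot>\<^sub>m P - d \<cdot>\<^sub>m (P * B)"
    using P B by (simp add: mult_smult_distrib[OF P] mult_smult_distrib[OF P one_carrier_mat])
  finally have PX: "P * X = c \<cdot>\<^sub>m P - d \<cdot>\<^sub>m (P * B)" .
  have PB: "P * B \<in> carrier_mat n n" using P B by auto
  have "P * X * Q = (c \<cdot>\<^sub>m P) * Q - (d \<cdot>\<^sub>m (P * B)) * Q"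
    unfolding PX by (rule minus_mult_distrib_mat[OF smult_carrier_mat[OF P] smult_carrier_mat[OF PB] Q])
  also have "\<dots> = c \<cdot>\<^sub>m (P * Q) - d \<cdot>\<^sub>m (P * B * Q)"
    using P PB Q by (simp add: mult_smult_assoc_mat[OF P Q] mult_smult_assoc_mat[OF PB Q])
  finally have "P * X * Q = c \<cdot>\<^sub>m (P * Q) - d \<cdot>\<^sub>m (P * B * Q)" .
  hence e1: "P * X * Q = c \<cdot>\<^sub>m 1\<^sub>m n - d \<cdot>\<^sub>m A" unfolding w(1) w(3)[symmetric] .
  have XB: "X * B \<in> carrier_mat n n" using X B by auto
  have PX: "P * X \<in> carrier_mat n n" using X P by auto
  have BQ: "B * Q \<in> carrier_mat n n" using Q B by auto
  have "(c \<cdot>\<^sub>m 1\<^sub>m n - d \<cdot>\<^sub>m A) * A = (P * X * Q) * (P * B * Q)"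
    unfolding e1 w(3)[symmetric] ..
  also have "\<dots> = (P * X) * (Q * (P * (B * Q)))"
    unfolding assoc_mult_mat[OF P B Q] by (rule assoc_mult_mat[OF PX Q]) (use P BQ in auto)
  also have "Q * (P * (B * Q)) = (Q * P) * (B * Q)"
    by (rule assoc_mult_mat[symmetric, OF Q P BQ])
  also have "(Q * P) * (B * Q) = B * Q" unfolding w(2) by (rule left_mult_one_mat[OF BQ])
  also have "(P * X) * (B * Q) = ((P * X) * B) * Q"
    by (rule assoc_mult_mat[symmetric, OF PX B Q])
  also have "(P * X) * B = P * (X * B)"
    by (rule assoc_mult_mat[OF P X B])
  finally have e2: "(c \<cdot>\<^sub>m 1\<^sub>m n - d \<cdot>\<^sub>m A) * A = P * (X * B) * Q" .
  show ?thesis unfolding X_def[symmetric]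
    by (rule similar_mat_witI[OF w(1) w(2) e2 _ XB P Q]) (use A X in auto)
qed


lemma proots_linprod: "proots (\<Prod>r\<leftarrow>rs. [:-r,1:]) = mset (rs :: real list)"
proof -
  have "proots (\<Prod>r\<leftarrow>rs. [:-r,1:]) = sum_list (map proots (map (\<lambda>r. [:-r,1:]) rs))"
    by (subst proots_prod_list[symmetric]) (auto simp: o_def)
  also have "\<dots> = mset rs" by (induction rs) auto
  finally show ?thesis .
qed

lemma eigs_linprod: "char_poly M = (\<Prod>r\<leftarrow>rs. [:-r,1:]) \<Longrightarrow> eigs M = sort rs"
  unfolding eigs_def by (simp add: proots_linprod)

lemma f_mono: "x \<le> y \<Longrightarrow> y \<le> 1 \<Longrightarrow> f_newton x \<le> f_newton y"
proof -
  assume a: "x \<le> y" "y \<le> 1"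
  have "0 \<le> (y - x) * (2 - x - y)" using a by (intro mult_nonneg_nonneg) auto
  thus ?thesis unfolding f_newton_def by (simp add: algebra_simps power2_eq_square)
qed

lemma f_hi: "c \<le> y \<Longrightarrow> y \<le> 2 - c \<Longrightarrow> f_newton c \<le> f_newton y"
proof -
  assume a: "c \<le> y" "y \<le> 2 - c"
  have "0 \<le> (y - c) * (2 - c - y)" using a by (intro mult_nonneg_nonneg) auto
  thus ?thesis unfolding f_newton_def by (simp add: algebra_simps power2_eq_square)
qed

lemma final_sort:
  fixes \<mu> :: "real list" and c :: real
  assumes srt: "sorted \<mu>" and k: "k < length \<mu>" "1 \<le> k"
    and c1: "c < 1" and le: "\<mu> ! (k - 1) \<le> c" and ge: "c \<le> \<mu> ! k"
    and up: "\<forall>x\<in>set \<mu>. x \<le> 2 - c"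
  shows "\<forall>j<k. sort (map f_newton \<mu>) ! j = f_newton (\<mu> ! j)"
proof -
  have lo: "\<mu> ! i \<le> c" if "i < k" for i
  proof -
    have "\<mu> ! i \<le> \<mu> ! (k - 1)" by (rule sorted_nth_mono[OF srt]) (use that k in auto)
    thus ?thesis using le by linarith
  qed
  have hi: "c \<le> \<mu> ! i" if "k \<le> i" "i < length \<mu>" for i
    using sorted_nth_mono[OF srt, of k i] that ge by auto
  define xs where "xs = map f_newton (take k \<mu>)"
  define ys where "ys = map f_newton (drop k \<mu>)"
  have lxs: "length xs = k" using k unfolding xs_def by simp
  have xsn: "xs ! i = f_newton (\<mu> ! i)" if "i < k" for i
    using that k unfolding xs_def by simp
  have split: "map f_newton \<mu> = xs @ ys" unfolding xs_def ys_def
    by (simp flip: map_append)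
  have sxs: "sorted xs"
    unfolding sorted_iff_nth_mono lxs
  proof (intro allI impI)
    fix i j assume ij: "i \<le> j" "j < k"
    have "\<mu> ! i \<le> \<mu> ! j" using sorted_nth_mono[OF srt ij(1)] ij k by simp
    moreover have "\<mu> ! j \<le> 1" using lo[OF ij(2)] c1 by simp
    ultimately show "xs ! i \<le> xs ! j" using xsn ij by (simp add: f_mono)
  qed
  have sep: "x \<le> y" if "x \<in> set xs" "y \<in> set ys" for x y
  proof -
    from that(1) obtain i where i0: "i < length xs" "xs ! i = x" by (auto simp: in_set_conv_nth)
    hence i: "i < k" "x = f_newton (\<mu> ! i)" using lxs xsn by auto
    from that(2) obtain i' where i0': "i' < length ys" "ys ! i' = y" by (auto simp: in_set_conv_nth)
    hence i': "i' < length \<mu> - k" "y = f_newton (\<mu> ! (k + i'))"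
      using k unfolding ys_def by auto
    have "x \<le> f_newton c" using i lo[OF i(1)] c1 by (simp add: f_mono)
    also have "f_newton c \<le> y" unfolding i'(2)
      using hi[of "k + i'"] i' up k by (intro f_hi) auto
    finally show ?thesis .
  qed
  have "sort (xs @ ys) = xs @ sort ys"
    by (rule properties_for_sort) (use sxs sep in \<open>auto simp: sorted_append\<close>)
  thus ?thesis using split lxs xsn by (auto simp: nth_append)
qed

lemma ut_smult:
  fixes B :: "'a :: comm_ring_1 mat"
  assumes "B \<in> carrier_mat n n" "upper_triangular B"
  shows "upper_triangular (c \<cdot>\<^sub>m B)" "diag_mat (c \<cdot>\<^sub>m B) = map (\<lambda>x. c * x) (diag_mat B)"
  using assms by (auto simp: upper_triangular_def diag_mat_def)

lemma ut_X:
  fixes B :: "'a :: comm_ring_1 mat"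
  assumes B: "B \<in> carrier_mat n n" "upper_triangular B"
  shows "upper_triangular (c \<cdot>\<^sub>m 1\<^sub>m n - d \<cdot>\<^sub>m B)"
    "\<And>i. i < n \<Longrightarrow> (c \<cdot>\<^sub>m 1\<^sub>m n - d \<cdot>\<^sub>m B) $$ (i,i) = c - d * B $$ (i,i)"
  using assms by (auto simp: upper_triangular_def)

theorem theorem2p3:
  fixes n k :: nat and A :: "real mat" and \<alpha> \<beta> \<xi> \<eta> \<zeta> :: real
  assumes "n > 0"
    and "spd_mat n A"
    and "\<alpha> = eigs A ! 0" and "\<beta> = eigs A ! (n - 1)"
    and "\<xi> \<ge> 0" and "\<eta> = 1 / (1 + \<xi>)" and "\<zeta> = 2 * \<eta> / (\<alpha> + \<beta>)"
    and "2 * \<eta> * \<alpha> / (\<alpha> + \<beta>) + 2 * (1 - \<eta>) < 1"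
    and "1 \<le> k" and "k + 1 \<le> n"
    and "eigs (\<zeta> \<cdot>\<^sub>m A) ! (k - 1) \<le> 2 * \<eta> * \<alpha> / (\<alpha> + \<beta>) + 2 * (1 - \<eta>)"
    and "2 * \<eta> * \<alpha> / (\<alpha> + \<beta>) + 2 * (1 - \<eta>) \<le> eigs (\<zeta> \<cdot>\<^sub>m A) ! k"
  shows "\<forall>j \<in> {1..k}.
     eigs ((2 * \<zeta> \<cdot>\<^sub>m 1\<^sub>m n - \<zeta>^2 \<cdot>\<^sub>m A) * A) ! (j - 1)
       = f_newton (eigs (\<zeta> \<cdot>\<^sub>m A) ! (j - 1))"
proof -
  note asm = assms
  have A: "A \<in> carrier_mat n n" and sym: "transpose_mat A = A"
    and pd: "\<forall>x \<in> carrier_vec n. x \<noteq> 0\<^sub>v n \<longrightarrow> x \<bullet> (A *\<^sub>v x) > 0"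
    using asm(2) unfolding spd_mat_def by auto
  obtain rs where cp: "char_poly A = (\<Prod>r\<leftarrow>rs. [:-r,1:])" and len: "length rs = n"
    using real_split[OF A sym] by blast
  have pos: "r > 0" if "r \<in> set rs" for r
  proof (rule pos_eig_pos[OF A pd])
    show "poly (char_poly A) r = 0" unfolding cp poly_linprod using that
      by (simp add: prod_list_zero_iff)
  qed
  define s where "s = sort rs"
  have eA: "eigs A = s" unfolding s_def by (rule eigs_linprod[OF cp])
  have ls: "length s = n" and ss: "sorted s" and sets: "set s = set rs" and ms: "mset s = mset rs"
    unfolding s_def using len by auto
  have al: "\<alpha> = s ! 0" and be: "\<beta> = s ! (n - 1)" using asm(3,4) eA by auto
  have apos: "\<alpha> > 0" using al pos sets ls asm(1) by (metis nth_mem)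
  have "n - 1 < length s" using asm(1) ls by simp
  hence "s ! (n - 1) \<in> set rs" using sets nth_mem by metis
  hence bpos: "\<beta> > 0" using be pos by simp
  have etapos: "\<eta> > 0" using asm(5,6) by simp
  have zpos: "\<zeta> > 0" using asm(7) etapos apos bpos by simp
  obtain B P Q where sch: "schur_decomposition A rs = (B, P, Q)" using prod_cases3 by blast
  from schur_decomposition[OF A cp sch] have sim: "similar_mat_wit A B P Q"
    and utB: "upper_triangular B" and dB: "diag_mat B = rs" by auto
  have B: "B \<in> carrier_mat n n" using similar_mat_witD2[OF A sim] by auto
  have "similar_mat (\<zeta> \<cdot>\<^sub>m A) (\<zeta> \<cdot>\<^sub>m B)"
    unfolding similar_mat_def using sim_smult[OF A sim, of \<zeta>] by blast
  hence "char_poly (\<zeta> \<cdot>\<^sub>m A) = char_poly (\<zeta> \<cdot>\<^sub>m B)" by (rule char_poly_similar)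
  also have "\<dots> = (\<Prod>r\<leftarrow>diag_mat (\<zeta> \<cdot>\<^sub>m B). [:-r,1:])"
    by (rule char_poly_upper_triangular[OF smult_carrier_mat[OF B] ut_smult(1)[OF B utB]])
  also have "diag_mat (\<zeta> \<cdot>\<^sub>m B) = map (\<lambda>x. \<zeta> * x) rs"
    using ut_smult(2)[OF B utB, of \<zeta>] dB by simp
  finally have e1: "eigs (\<zeta> \<cdot>\<^sub>m A) = sort (map (\<lambda>x. \<zeta> * x) rs)" by (rule eigs_linprod)
  define \<mu> where "\<mu> = map (\<lambda>x. \<zeta> * x) s"
  have smu: "sorted \<mu>" unfolding sorted_iff_nth_mono
  proof (intro allI impI)
    fix i j assume ij: "i \<le> j" "j < length \<mu>"
    hence j: "j < length s" unfolding \<mu>_def by simp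
    have "s ! i \<le> s ! j" by (rule sorted_nth_mono[OF ss ij(1) j])
    hence "\<zeta> * s ! i \<le> \<zeta> * s ! j" using zpos by (simp add: mult_left_mono)
    thus "\<mu> ! i \<le> \<mu> ! j" unfolding \<mu>_def using ij j by simp
  qed
  have msmu: "mset \<mu> = mset (map (\<lambda>x. \<zeta> * x) rs)" unfolding \<mu>_def by (simp only: mset_map ms)
  have eZ: "eigs (\<zeta> \<cdot>\<^sub>m A) = \<mu>" unfolding e1
    by (rule properties_for_sort[OF msmu smu])
  define X where "X = 2 * \<zeta> \<cdot>\<^sub>m 1\<^sub>m n - \<zeta>^2 \<cdot>\<^sub>m B"
  have X: "X \<in> carrier_mat n n" unfolding X_def using B
    by (intro minus_carrier_mat smult_carrier_mat) auto
  have utX: "upper_triangular X" and dX: "\<And>i. i < n \<Longrightarrow> X $$ (i,i) = 2 * \<zeta> - \<zeta>^2 * B $$ (i,i)"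
    unfolding X_def using ut_X[OF B utB] by auto
  have dXB: "diag_mat (X * B) = map (\<lambda>r. f_newton (\<zeta> * r)) rs"
  proof -
    have "diag_mat (X * B) = map (\<lambda>i. X $$ (i,i) * B $$ (i,i)) [0..<n]" by (rule ut_mult(2)[OF X B utX utB])
    also have "\<dots> = map (\<lambda>i. f_newton (\<zeta> * B $$ (i,i))) [0..<n]"
      by (intro map_cong refl) (simp add: dX f_newton_def algebra_simps power2_eq_square)
    also have "\<dots> = map (\<lambda>r. f_newton (\<zeta> * r)) rs" unfolding dB[symmetric] diag_mat_def using B by simp
    finally show ?thesis .
  qed
  have "similar_mat ((2 * \<zeta> \<cdot>\<^sub>m 1\<^sub>m n - \<zeta>^2 \<cdot>\<^sub>m A) * A) (X * B)"
    unfolding similar_mat_def X_def using sim_newton[OF A sim, of "2 * \<zeta>" "\<zeta>^2"] by blast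
  hence "char_poly ((2 * \<zeta> \<cdot>\<^sub>m 1\<^sub>m n - \<zeta>^2 \<cdot>\<^sub>m A) * A) = char_poly (X * B)"
    by (rule char_poly_similar)
  also have "\<dots> = (\<Prod>r\<leftarrow>diag_mat (X * B). [:-r,1:])"
    by (rule char_poly_upper_triangular[OF mult_carrier_mat[OF X B] ut_mult(1)[OF X B utX utB]])
  also note dXB
  finally have e2: "eigs ((2 * \<zeta> \<cdot>\<^sub>m 1\<^sub>m n - \<zeta>^2 \<cdot>\<^sub>m A) * A) = sort (map (\<lambda>r. f_newton (\<zeta> * r)) rs)"
    by (rule eigs_linprod)
  have eM: "eigs ((2 * \<zeta> \<cdot>\<^sub>m 1\<^sub>m n - \<zeta>^2 \<cdot>\<^sub>m A) * A) = sort (map f_newton \<mu>)"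
  proof -
    have "mset (map f_newton \<mu>) = mset (map (\<lambda>r. f_newton (\<zeta> * r)) rs)"
      unfolding \<mu>_def map_map o_def by (simp only: mset_map ms)
    hence "mset (sort (map f_newton \<mu>)) = mset (map (\<lambda>r. f_newton (\<zeta> * r)) rs)" by simp
    thus ?thesis unfolding e2 by (rule properties_for_sort) simp
  qed
  define c where "c = 2 * \<eta> * \<alpha> / (\<alpha> + \<beta>) + 2 * (1 - \<eta>)"
  have abpos: "\<alpha> + \<beta> > 0" using apos bpos by simp
  have zb: "\<zeta> * \<beta> = 2 - c" unfolding c_def asm(7) using abpos
    by (simp add: field_simps)
  have up: "\<forall>x\<in>set \<mu>. x \<le> 2 - c"
  proof
    fix x assume "x \<in> set \<mu>"
    then obtain i where i: "i < n" "x = \<zeta> * s ! i" unfolding \<mu>_def using ls by (auto simp: in_set_conv_nth)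
    have "s ! i \<le> \<beta>" unfolding be using sorted_nth_mono[OF ss, of i "n - 1"] i ls by auto
    hence "x \<le> \<zeta> * \<beta>" using i zpos by (simp add: mult_left_mono)
    thus "x \<le> 2 - c" using zb by simp
  qed
  have lmu: "length \<mu> = n" unfolding \<mu>_def using ls by simp
  have k1: "k < length \<mu>" using asm(10) lmu by simp
  have c1: "c < 1" using asm(8) unfolding c_def .
  have le: "\<mu> ! (k - 1) \<le> c" using asm(11) unfolding c_def eZ .
  have ge: "c \<le> \<mu> ! k" using asm(12) unfolding c_def eZ .
  have fin: "\<forall>j<k. sort (map f_newton \<mu>) ! j = f_newton (\<mu> ! j)"
    by (rule final_sort[OF smu k1 asm(9) c1 le ge up])
  show ?thesis
  proof
    fix j assume "j \<in> {1..k}"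
    hence "j - 1 < k" by auto
    thus "eigs ((2 * \<zeta> \<cdot>\<^sub>m 1\<^sub>m n - \<zeta>^2 \<cdot>\<^sub>m A) * A) ! (j - 1) = f_newton (eigs (\<zeta> \<cdot>\<^sub>m A) ! (j - 1))"
      using fin eM eZ by simp
  qed
qed

end
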